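(* Let $X_0,X_1,\ldots$ be a stationary mean-zero Gaussian sequence with covariance $\Gamma(k)=\mathrm{E}[X_0X_k]$, $\Gamma(0)=1$, having a spectral density $f$ (so $\Gamma(k)=\int_{-\pi}^{\pi}e^{-ik\phi}f(\phi)\,d\phi$) which is continuous and strictly positive on $[-\pi,\pi]$. Let $K=K_n$ be real numbers with $K=o\!\left(\sqrt{n/\log\log n}\right)$. With $$A(x)=\sum_{k=0}^{n}\sum_{j=0}^{n}\Gamma(k-j)x^{k+j},\quad B(x)=\sum_{k=0}^{n}\sum_{j=0}^{n}\Gamma(k-j)\,k\,x^{k+j-1},\quad C(x)=\sum_{k=0}^{n}\sum_{j=0}^{n}\Gamma(k-j)\,kj\,x^{k+j-2},$$ and $$F_2(x)=\frac{1}{\pi}\,\frac{\sqrt{2}\,|B(x)K|}{A(x)^{3/2}}\exp\!\left(-\frac{K^2}{2A(x)}\right)\mathrm{erf}\!\left(\frac{|B(x)K|}{\sqrt{2A(x)\left(A(x)C(x)-B(x)^2\right)}}\right),$$ we have, as $n\to\infty$, $$\int_{-1}^{1}F_2(x)\,dx=o(\log\log n).$$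
   Context: $A,B,C$ are $\mathrm{E}[P_n(x)^2]$, $\mathrm{E}[P_n(x)P_n'(x)]$, $\mathrm{E}[P_n'(x)^2]$ for $P_n(x)=\sum_{k=0}^nX_kx^k$. $\mathrm{erf}(u)=\frac{2}{\sqrt{\pi}}\int_0^u e^{-t^2}dt$. *)

theory Defs
  imports "HOL-Analysis.Analysis" "HOL-Library.Landau_Symbols"
begin

definition erf :: "real \<Rightarrow> real" where
  "erf u = 2 / sqrt pi * (LBINT t=0..u. exp (- (t^2)))"

definition covA :: "(int \<Rightarrow> real) \<Rightarrow> nat \<Rightarrow> real \<Rightarrow> real" where
  "covA \<Gamma> n x = (\<Sum>k\<le>n. \<Sum>j\<le>n. \<Gamma> (int k - int j) * x ^ (k + j))"

definition covB :: "(int \<Rightarrow> real) \<Rightarrow> nat \<Rightarrow> real \<Rightarrow> real" where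
  "covB \<Gamma> n x = (\<Sum>k\<le>n. \<Sum>j\<le>n. \<Gamma> (int k - int j) * real k * x ^ (k + j - 1))"

definition covC :: "(int \<Rightarrow> real) \<Rightarrow> nat \<Rightarrow> real \<Rightarrow> real" where
  "covC \<Gamma> n x = (\<Sum>k\<le>n. \<Sum>j\<le>n. \<Gamma> (int k - int j) * real k * real j * x ^ (k + j - 2))"

definition F2 :: "(int \<Rightarrow> real) \<Rightarrow> nat \<Rightarrow> real \<Rightarrow> real \<Rightarrow> real" where
  "F2 \<Gamma> n K x =
     (let A = covA \<Gamma> n x; B = covB \<Gamma> n x; C = covC \<Gamma> n x in
      1 / pi * (sqrt 2 * \<bar>B * K\<bar> / A powr (3/2)) * exp (- (K^2) / (2 * A))
      * erf (\<bar>B * K\<bar> / sqrt (2 * A * (A * C - B^2))))"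

end

theory Submission
  imports Defs "HOL-Real_Asymp.Real_Asymp"
begin


lemma erf_bound:
  assumes u: "u \<ge> 0"
  shows "\<bar>erf u\<bar> \<le> 2"
proof -
  have c: "continuous_on {0..u} (\<lambda>t::real. exp (- (t^2)))"
    by (intro continuous_intros)
  have "(LBINT t=0..u. exp (- (t^2))) = (LBINT t:{0..u}. exp (- (t^2)))"
    using interval_integral_Icc[of 0 u "\<lambda>t. exp (- (t^2))"] u by (simp add: zero_ereal_def)
  also have "\<dots> = integral {0..u} (\<lambda>t. exp (- (t^2)))"
    using set_borel_integral_eq_integral(2)[OF borel_integrable_atLeastAtMost'[OF c]] by simp
  finally have eq: "(LBINT t=0..u. exp (- (t^2))) = integral {0..u} (\<lambda>t. exp (- (t^2)))" .
  have int1: "(\<lambda>t::real. exp (- (t^2))) integrable_on {0..u}"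
    using c integrable_continuous_interval by blast
  have hi: "((\<lambda>t. inverse (1 + t^2)) has_integral (arctan u - arctan 0)) {0..u}"
    by (rule fundamental_theorem_of_calculus[OF u])
       (auto intro!: has_real_derivative_iff_has_vector_derivative[THEN iffD1] DERIV_arctan[THEN has_field_derivative_at_within])
  have le: "integral {0..u} (\<lambda>t. exp (- (t^2))) \<le> arctan u - arctan 0"
  proof (rule has_integral_le[OF integrable_integral[OF int1] hi])
    fix t :: real assume "t \<in> {0..u}"
    have "1 + t^2 \<le> exp (t^2)" using exp_ge_add_one_self[of "t^2"] by simp
    then have "exp (- (t^2)) * (1 + t^2) \<le> 1"
      by (metis exp_gt_zero exp_minus_inverse mult_left_mono less_eq_real_def mult.commute)
    then show "exp (- (t^2)) \<le> inverse (1 + t^2)"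
      by (simp add: field_simps add_pos_nonneg)
  qed
  have ge: "0 \<le> integral {0..u} (\<lambda>t. exp (- (t^2)))"
    by (rule integral_nonneg[OF int1]) auto
  have "arctan u < pi/2" by (rule arctan_ubound)
  have pi4: "pi \<le> 4" using pi_less_4 by simp
  have "sqrt pi \<le> 2" using real_sqrt_le_mono[OF pi4] by simp
  have sp: "sqrt pi > 0" by simp
  have "erf u = 2 / sqrt pi * integral {0..u} (\<lambda>t. exp (- (t^2)))"
    by (simp add: erf_def eq)
  moreover have "2 / sqrt pi * integral {0..u} (\<lambda>t. exp (- (t^2))) \<le> 2 / sqrt pi * (pi/2)"
    using le \<open>arctan u < pi/2\<close> sp by (intro mult_left_mono) auto
  moreover have "2 / sqrt pi * (pi/2) = sqrt pi"
    using sp by (simp add: field_simps)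
  moreover have "0 \<le> 2 / sqrt pi * integral {0..u} (\<lambda>t. exp (- (t^2)))"
    using ge sp by simp
  ultimately show ?thesis using \<open>sqrt pi \<le> 2\<close> by linarith
qed



lemma sums_rec:
  fixes y :: real
  shows "(\<Sum>k<Suc n. y^k) = 1 + y * (\<Sum>k<n. y^k)"
    and "(\<Sum>k<Suc n. (real k + 1) * y^k) = (\<Sum>k<Suc n. y^k) + y * (\<Sum>k<n. (real k + 1) * y^k)"
    and "(\<Sum>k<Suc n. (real k + 1) * (real k + 2) / 2 * y^k) =
         (\<Sum>k<Suc n. (real k + 1) * y^k) + y * (\<Sum>k<n. (real k + 1) * (real k + 2) / 2 * y^k)"
proof -
  show "(\<Sum>k<Suc n. y^k) = 1 + y * (\<Sum>k<n. y^k)"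
    by (subst sum.lessThan_Suc_shift) (simp add: sum_distrib_left del: sum.lessThan_Suc)
  show "(\<Sum>k<Suc n. (real k + 1) * y^k) = (\<Sum>k<Suc n. y^k) + y * (\<Sum>k<n. (real k + 1) * y^k)"
    by (subst (1 2) sum.lessThan_Suc_shift) (simp add: sum_distrib_left sum.distrib algebra_simps del: sum.lessThan_Suc)
  show "(\<Sum>k<Suc n. (real k + 1) * (real k + 2) / 2 * y^k) =
         (\<Sum>k<Suc n. (real k + 1) * y^k) + y * (\<Sum>k<n. (real k + 1) * (real k + 2) / 2 * y^k)"
  proof -
    have e: "(\<Sum>i<n. (real (Suc i) + 1) * (real (Suc i) + 2) / 2 * y^(Suc i)) =
      (\<Sum>i<n. (real (Suc i) + 1) * y^(Suc i) + y * ((real i + 1) * (real i + 2) / 2 * y^i))"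
      by (rule sum.cong) (simp_all add: field_simps)
    show ?thesis
      apply (subst (1 2) sum.lessThan_Suc_shift)
      apply (simp only: e sum.distrib sum_distrib_left)
      apply simp
      done
  qed
qed

lemma sums_ineq:
  fixes y :: real assumes y: "y \<ge> 0"
  shows "(\<Sum>k<n. (real k + 1) * y^k) \<le> (\<Sum>k<n. y^k)^2 \<and>
         (\<Sum>k<n. (real k + 1) * (real k + 2) / 2 * y^k) \<le> (\<Sum>k<n. y^k)^3"
proof (induction n)
  case 0 then show ?case by simp
next
  case (Suc n)
  define s where "s = (\<Sum>k<n. y^k)"
  define s' where "s' = (\<Sum>k<Suc n. y^k)"
  define t where "t = (\<Sum>k<n. (real k + 1) * y^k)"
  define t' where "t' = (\<Sum>k<Suc n. (real k + 1) * y^k)"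
  define u where "u = (\<Sum>k<n. (real k + 1) * (real k + 2) / 2 * y^k)"
  define u' where "u' = (\<Sum>k<Suc n. (real k + 1) * (real k + 2) / 2 * y^k)"
  have r1: "s' = 1 + y * s" and r2: "t' = s' + y * t" and r3: "u' = t' + y * u"
    using sums_rec[of y n] by (simp_all add: s_def s'_def t_def t'_def u_def u'_def)
  have s0: "s \<ge> 0" unfolding s_def using y by (intro sum_nonneg) auto
  have ss: "s \<le> s'" using r1 s0 y
    by (metis s'_def s_def sum.lessThan_Suc le_add_same_cancel1 zero_le_power)
  have ih: "t \<le> s^2" "u \<le> s^3" using Suc.IH by (simp_all add: s_def t_def u_def)
  have "t' \<le> s' + y * s^2" using r2 ih y by (simp add: mult_left_mono)
  also have "\<dots> \<le> s' + y * (s * s')" using ss s0 y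
    by (intro add_left_mono mult_left_mono) (auto simp: power2_eq_square mult_left_mono)
  also have "\<dots> = s'^2" using r1 by (simp add: power2_eq_square algebra_simps)
  finally have A: "t' \<le> s'^2" .
  have "u' \<le> s'^2 + y * s^3" using r3 ih A y by (smt (verit) mult_left_mono)
  also have "\<dots> \<le> s'^2 + y * (s * s'^2)"
  proof -
    have "s * s \<le> s' * s'" using ss s0 by (intro mult_mono) auto
    then have "s * (s * s) \<le> s * (s' * s')" using s0 by (intro mult_left_mono) auto
    then show ?thesis using y by (intro add_left_mono mult_left_mono) (auto simp: power3_eq_cube power2_eq_square)
  qed
  also have "\<dots> = s'^3" using r1 by (simp add: power3_eq_cube power2_eq_square algebra_simps)
  finally have B: "u' \<le> s'^3" .
  show ?case using A B by (simp add: s'_def t'_def u'_def)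
qed

lemma S2_bound:
  fixes y :: real assumes y: "y \<ge> 0"
  shows "(\<Sum>k\<le>n. (real k)^2 * y^(k-1)) \<le> 2 * (\<Sum>k\<le>n. y^k)^3"
proof -
  have "(\<Sum>k\<le>n. (real k)^2 * y^(k-1)) = (\<Sum>k<Suc n. (real k)^2 * y^(k-1))"
    by (simp add: lessThan_Suc_atMost)
  also have "\<dots> = (\<Sum>k<n. (real k + 1)^2 * y^k)"
    by (subst sum.lessThan_Suc_shift) (simp add: add.commute del: sum.lessThan_Suc)
  also have "\<dots> \<le> (\<Sum>k<n. 2 * ((real k + 1) * (real k + 2) / 2 * y^k))"
    using y by (intro sum_mono) (auto simp: power2_eq_square intro!: mult_right_mono)
  also have "\<dots> = 2 * (\<Sum>k<n. (real k + 1) * (real k + 2) / 2 * y^k)"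
    by (simp add: sum_distrib_left)
  also have "\<dots> \<le> 2 * (\<Sum>k<n. y^k)^3" using sums_ineq[OF y, of n] by simp
  also have "\<dots> \<le> 2 * (\<Sum>k\<le>n. y^k)^3"
  proof -
    have "0 \<le> (\<Sum>k<n. y^k)" using y by (intro sum_nonneg) auto
    moreover have "(\<Sum>k<n. y^k) \<le> (\<Sum>k\<le>n. y^k)" using y
      by (intro sum_mono2) auto
    ultimately show ?thesis by (simp add: power_mono)
  qed
  finally show ?thesis .
qed

lemma S_bound:
  fixes y :: real assumes y: "0 \<le> y" "y \<le> 1"
  shows "(\<Sum>k\<le>n. y^k) * (1 / (real n + 1) + (1 - y)) \<le> 2"
proof -
  have a: "(\<Sum>k\<le>n. y^k) \<le> real n + 1"
  proof -
    have "(\<Sum>k\<le>n. y^k) \<le> (\<Sum>k\<le>n. (1::real))" using y by (intro sum_mono) (auto simp: power_le_one)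
    then show ?thesis by simp
  qed
  have b: "(1 - y) * (\<Sum>k\<le>n. y^k) \<le> 1"
    using sum_gp_basic[of y n] y by simp
  have "(\<Sum>k\<le>n. y^k) * (1 / (real n + 1)) \<le> 1" using a by (simp add: field_simps)
  moreover have "(\<Sum>k\<le>n. y^k) * (1 / (real n + 1) + (1 - y)) = (\<Sum>k\<le>n. y^k) * (1 / (real n + 1)) + (1 - y) * (\<Sum>k\<le>n. y^k)"
    by (simp add: algebra_simps)
  ultimately show ?thesis using b by linarith
qed



lemma Gamma_cos:
  fixes \<Gamma> :: "int \<Rightarrow> real" and f :: "real \<Rightarrow> real"
  assumes f_cont: "continuous_on {-pi..pi} f"
    and spectral: "\<forall>k. complex_of_real (\<Gamma> k) =
        integral {-pi..pi} (\<lambda>\<phi>. exp (- \<i> * of_int k * of_real \<phi>) * of_real (f \<phi>))"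
  shows "\<Gamma> k = integral {-pi..pi} (\<lambda>\<phi>. cos (real_of_int k * \<phi>) * f \<phi>)"
proof -
  let ?F = "\<lambda>\<phi>. exp (- \<i> * of_int k * of_real \<phi>) * of_real (f \<phi>)"
  have "continuous_on {-pi..pi} ?F"
    by (intro continuous_on_mult continuous_on_exp continuous_on_mult_left continuous_on_of_real continuous_on_id f_cont)
  then have "?F integrable_on {-pi..pi}" by (rule integrable_continuous_interval)
  then have h1: "((\<lambda>\<phi>. Re (?F \<phi>)) has_integral Re (integral {-pi..pi} ?F)) {-pi..pi}"
    by (intro has_integral_Re integrable_integral)
  have h2: "Re (?F \<phi>) = cos (real_of_int k * \<phi>) * f \<phi>" for \<phi>
  proof -
    have "- \<i> * of_int k * of_real \<phi> = \<i> * complex_of_real (- (real_of_int k * \<phi>))"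
      by (simp add: algebra_simps)
    then have "exp (- \<i> * of_int k * of_real \<phi>) = cis (- (real_of_int k * \<phi>))"
      by (simp only: cis_conv_exp)
    then show ?thesis
      by (simp only: times_complex.sel Re_complex_of_real Im_complex_of_real complex.sel cis.sel cos_minus mult_zero_right diff_0_right)
  qed
  have h3: "Re (integral {-pi..pi} ?F) = \<Gamma> k"
    by (simp only: spectral[rule_format, of k, symmetric] Re_complex_of_real)
  have h2': "(\<lambda>\<phi>. Re (?F \<phi>)) = (\<lambda>\<phi>. cos (real_of_int k * \<phi>) * f \<phi>)"
    by (rule ext) (rule h2)
  have "((\<lambda>\<phi>. cos (real_of_int k * \<phi>) * f \<phi>) has_integral \<Gamma> k) {-pi..pi}"
    using h1 unfolding h2' h3 .
  then show ?thesis by (simp add: integral_unique)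
qed

lemma int_cos:
  fixes m :: int
  shows "((\<lambda>\<phi>. cos (real_of_int m * \<phi>)) has_integral (if m = 0 then 2 * pi else 0)) {-pi..pi}"
proof (cases "m = 0")
  case True
  then show ?thesis using has_integral_const_real[of "1::real" "-pi" pi] by (simp add: mult.commute real_scaleR_def)
next
  case False
  have hI: "((\<lambda>\<phi>. cos (real_of_int m * \<phi>)) has_integral
          (sin (real_of_int m * pi) / m - sin (real_of_int m * (-pi)) / m)) {-pi..pi}"
  proof (rule fundamental_theorem_of_calculus)
    show "- pi \<le> pi" by simp
    fix x assume "x \<in> {-pi..pi}"
    have "((\<lambda>\<phi>. sin (real_of_int m * \<phi>) / m) has_real_derivative cos (real_of_int m * x)) (at x)"
      using False by (auto intro!: derivative_eq_intros)
    then show "((\<lambda>\<phi>. sin (real_of_int m * \<phi>) / m) has_vector_derivative cos (real_of_int m * x)) (at x within {-pi..pi})"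
      by (simp add: has_real_derivative_iff_has_vector_derivative[symmetric] has_field_derivative_at_within)
  qed
  have s0: "sin (real_of_int m * pi) = 0" by (metis sin_npi_int mult.commute)
  have z: "sin (real_of_int m * pi) / m - sin (real_of_int m * (-pi)) / m = 0"
    using s0 by (simp only: mult_minus_right sin_minus)
  have e: "(if m = 0 then 2 * pi else 0) = sin (real_of_int m * pi) / m - sin (real_of_int m * (-pi)) / m"
    using z by (simp only: if_not_P[OF False])
  show ?thesis by (subst e) (rule hI)
qed

definition bil :: "(int \<Rightarrow> real) \<Rightarrow> nat \<Rightarrow> (nat \<Rightarrow> real) \<Rightarrow> (nat \<Rightarrow> real) \<Rightarrow> real" where
  "bil \<Gamma> n a b = (\<Sum>k\<le>n. \<Sum>j\<le>n. \<Gamma> (int k - int j) * a k * b j)"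

lemma Q_bounds:
  fixes \<Gamma> :: "int \<Rightarrow> real" and f :: "real \<Rightarrow> real"
  assumes f_cont: "continuous_on {-pi..pi} f"
    and Gc: "\<And>k. \<Gamma> k = integral {-pi..pi} (\<lambda>\<phi>. cos (real_of_int k * \<phi>) * f \<phi>)"
    and mM: "\<And>\<phi>. \<phi> \<in> {-pi..pi} \<Longrightarrow> m \<le> f \<phi> \<and> f \<phi> \<le> M"
  shows "2 * pi * m * (\<Sum>k\<le>n. (a k)^2) \<le> bil \<Gamma> n a a \<and> bil \<Gamma> n a a \<le> 2 * pi * M * (\<Sum>k\<le>n. (a k)^2)"
proof -
  define P where "P \<phi> = (\<Sum>k\<le>n. \<Sum>j\<le>n. a k * a j * cos (real_of_int (int k - int j) * \<phi>))" for \<phi>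
  have Pnn: "P \<phi> \<ge> 0" for \<phi>
  proof -
    have "P \<phi> = (\<Sum>k\<le>n. a k * cos (real k * \<phi>))^2 + (\<Sum>k\<le>n. a k * sin (real k * \<phi>))^2"
    proof -
      have "(\<Sum>k\<le>n. a k * cos (real k * \<phi>))^2 + (\<Sum>k\<le>n. a k * sin (real k * \<phi>))^2
        = (\<Sum>k\<le>n. \<Sum>j\<le>n. a k * cos (real k * \<phi>) * (a j * cos (real j * \<phi>)))
          + (\<Sum>k\<le>n. \<Sum>j\<le>n. a k * sin (real k * \<phi>) * (a j * sin (real j * \<phi>)))"
        by (simp only: power2_eq_square sum_product)
      also have "\<dots> = (\<Sum>k\<le>n. \<Sum>j\<le>n. a k * cos (real k * \<phi>) * (a j * cos (real j * \<phi>))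
                  + a k * sin (real k * \<phi>) * (a j * sin (real j * \<phi>)))"
        by (simp only: sum.distrib)
      also have "\<dots> = P \<phi>"
        unfolding P_def
      proof (intro sum.cong refl)
        fix k j assume "k \<in> {..n}" "j \<in> {..n}"
        have "real_of_int (int k - int j) * \<phi> = real k * \<phi> - real j * \<phi>"
          by (simp add: algebra_simps)
        then show "a k * cos (real k * \<phi>) * (a j * cos (real j * \<phi>)) + a k * sin (real k * \<phi>) * (a j * sin (real j * \<phi>))
            = a k * a j * cos (real_of_int (int k - int j) * \<phi>)"
          by (simp only: cos_diff) (simp add: algebra_simps)
      qed
      finally show ?thesis by simp
    qed
    then show ?thesis by simp
  qed
  have ci: "continuous_on {-pi..pi} (\<lambda>\<phi>. c * cos (r * \<phi>) * f \<phi>)" for c r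
    by (intro continuous_intros f_cont)
  have ii: "(\<lambda>\<phi>. c * cos (r * \<phi>) * f \<phi>) integrable_on {-pi..pi}" for c r
    using ci integrable_continuous_interval by blast
  have ci2: "continuous_on {-pi..pi} (\<lambda>\<phi>. c * cos (r * \<phi>))" for c r
    by (intro continuous_intros)
  have ii2: "(\<lambda>\<phi>. c * cos (r * \<phi>)) integrable_on {-pi..pi}" for c r
    using ci2 integrable_continuous_interval by blast
  have Pf: "bil \<Gamma> n a a = integral {-pi..pi} (\<lambda>\<phi>. P \<phi> * f \<phi>)"
  proof -
    have "integral {-pi..pi} (\<lambda>\<phi>. P \<phi> * f \<phi>) =
      integral {-pi..pi} (\<lambda>\<phi>. \<Sum>k\<le>n. \<Sum>j\<le>n. a k * a j * cos (real_of_int (int k - int j) * \<phi>) * f \<phi>)"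
      by (simp add: P_def sum_distrib_right)
    also have "\<dots> = (\<Sum>k\<le>n. \<Sum>j\<le>n. integral {-pi..pi} (\<lambda>\<phi>. a k * a j * cos (real_of_int (int k - int j) * \<phi>) * f \<phi>))"
      by (simp add: integral_sum ii integrable_sum)
    also have "\<dots> = bil \<Gamma> n a a"
      unfolding bil_def Gc by (intro sum.cong refl) (simp add: mult.assoc)
    finally show ?thesis by simp
  qed
  have P2: "((\<lambda>\<phi>. P \<phi>) has_integral (2 * pi * (\<Sum>k\<le>n. (a k)^2))) {-pi..pi}"
  proof -
    have "((\<lambda>\<phi>. P \<phi>) has_integral (\<Sum>k\<le>n. \<Sum>j\<le>n. a k * a j * (if int k - int j = 0 then 2 * pi else 0))) {-pi..pi}"
      unfolding P_def
      by (intro has_integral_sum finite_atMost has_integral_mult_right int_cos)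
    moreover have "(\<Sum>k\<le>n. \<Sum>j\<le>n. a k * a j * (if int k - int j = 0 then 2 * pi else 0)) = 2 * pi * (\<Sum>k\<le>n. (a k)^2)"
    proof -
      have "(\<Sum>k\<le>n. \<Sum>j\<le>n. a k * a j * (if int k - int j = 0 then 2 * pi else 0)) =
            (\<Sum>k\<le>n. \<Sum>j\<le>n. (if k = j then a k * a j * 2 * pi else 0))"
        by (intro sum.cong refl) auto
      also have "\<dots> = (\<Sum>k\<le>n. a k * a k * 2 * pi)" by (simp add: sum.delta)
      also have "\<dots> = 2 * pi * (\<Sum>k\<le>n. (a k)^2)" by (simp add: sum_distrib_left power2_eq_square algebra_simps)
      finally show ?thesis .
    qed
    ultimately show ?thesis by simp
  qed
  have Pi: "P integrable_on {-pi..pi}" using P2 by blast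
  have Pfi: "(\<lambda>\<phi>. P \<phi> * f \<phi>) integrable_on {-pi..pi}"
    unfolding P_def sum_distrib_right by (intro integrable_sum finite_atMost ii)
  have "integral {-pi..pi} (\<lambda>\<phi>. m * P \<phi>) \<le> integral {-pi..pi} (\<lambda>\<phi>. P \<phi> * f \<phi>)"
  proof (rule integral_le)
    show "(\<lambda>\<phi>. m * P \<phi>) integrable_on {-pi..pi}" using integrable_on_cmult_left[OF Pi] by simp
    show "(\<lambda>\<phi>. P \<phi> * f \<phi>) integrable_on {-pi..pi}" by (rule Pfi)
    fix x assume "x \<in> {-pi..pi}"
    then have "m \<le> f x" using mM by auto
    then show "m * P x \<le> P x * f x" using Pnn[of x] by (metis mult_right_mono mult.commute)
  qed
  moreover have "integral {-pi..pi} (\<lambda>\<phi>. P \<phi> * f \<phi>) \<le> integral {-pi..pi} (\<lambda>\<phi>. M * P \<phi>)"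
  proof (rule integral_le)
    show "(\<lambda>\<phi>. M * P \<phi>) integrable_on {-pi..pi}" using integrable_on_cmult_left[OF Pi] by simp
    show "(\<lambda>\<phi>. P \<phi> * f \<phi>) integrable_on {-pi..pi}" by (rule Pfi)
    fix x assume "x \<in> {-pi..pi}"
    then have "f x \<le> M" using mM by auto
    then show "P x * f x \<le> M * P x" using Pnn[of x] by (metis mult_left_mono mult.commute)
  qed
  moreover have "integral {-pi..pi} P = 2 * pi * (\<Sum>k\<le>n. (a k)^2)"
    using P2 by (simp add: integral_unique)
  ultimately show ?thesis using Pf by (simp add: algebra_simps)
qed



lemma exp_neg_le: "(z::real) \<ge> 0 \<Longrightarrow> exp (- z) \<le> 1 / (1 + z)"
proof -
  assume z: "z \<ge> 0"
  have "1 + z \<le> exp z" using exp_ge_add_one_self[of z] by simp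
  then have "1 / exp z \<le> 1 / (1 + z)" using z by (intro divide_left_mono) auto
  then show ?thesis by (simp add: exp_minus field_simps)
qed

lemma F_bound:
  fixes A B C K S w a1 a2 e :: real
  assumes a1: "a1 > 0" and a2: "a2 > 0" and S: "S > 0" and AS1: "a1 * S \<le> A" and AS2: "A \<le> a2 * S"
    and B: "B^2 \<le> 2 * a2^2 * S^4" and e: "\<bar>e\<bar> \<le> 2" and w: "w > 0" and Sw: "S * w \<le> 2"
  shows "\<bar>1 / pi * (sqrt 2 * \<bar>B * K\<bar> / A powr (3/2)) * exp (- (K^2) / (2 * A)) * e\<bar>
         \<le> (8 * a2^2 / (pi * a1 powr (3/2))) * (2 * sqrt 2) * (\<bar>K\<bar> / (sqrt w * (4 * a2 + K^2 * w)))"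
proof -
  have A: "A > 0" using a1 S AS1 by (smt (verit) mult_pos_pos)
  have Bb: "\<bar>B\<bar> \<le> sqrt 2 * a2 * S^2"
  proof -
    have "(sqrt 2 * a2 * S^2)^2 = 2 * a2^2 * S^4" by (simp add: power_mult_distrib power2_eq_square power4_eq_xxxx)
    then have "B^2 \<le> (sqrt 2 * a2 * S^2)^2" using B by simp
    then have "\<bar>B\<bar> \<le> \<bar>sqrt 2 * a2 * S^2\<bar>" by (simp add: abs_le_square_iff)
    then show ?thesis using a2 by simp
  qed
  have Ap: "a1 powr (3/2) * S powr (3/2) \<le> A powr (3/2)"
    using powr_mono2[of "3/2" "a1 * S" A] AS1 a1 S by (simp add: powr_mult)
  have a1p: "a1 powr (3/2) > 0" "S powr (3/2) > 0" using a1 S by auto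
  have Sp: "S powr (3/2) = S * sqrt S"
  proof -
    have "S powr (3/2) = S powr (1 + 1/2)" by simp
    also have "\<dots> = S * sqrt S" using S by (simp only: powr_add powr_one powr_half_sqrt less_imp_le)
    finally show ?thesis .
  qed
  define z where "z = K^2 / (2 * a2 * S)"
  have z0: "z \<ge> 0" unfolding z_def using a2 S by simp
  have ex1: "exp (- (K^2) / (2 * A)) \<le> exp (- z)"
  proof -
    have "K^2 / (2 * a2 * S) \<le> K^2 / (2 * A)" using A AS2 a2 S by (intro divide_left_mono) auto
    then show ?thesis unfolding z_def by simp
  qed
  have ex2: "exp (- z) \<le> 2 * a2 * S / (2 * a2 * S + K^2)"
  proof -
    have "1 / (1 + z) = 2 * a2 * S / (2 * a2 * S + K^2)" unfolding z_def using a2 S by (simp add: field_simps)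
    then show ?thesis using exp_neg_le[OF z0] by simp
  qed
  have "\<bar>1 / pi * (sqrt 2 * \<bar>B * K\<bar> / A powr (3/2)) * exp (- (K^2) / (2 * A)) * e\<bar>
        = 1 / pi * (sqrt 2 * \<bar>B\<bar> * \<bar>K\<bar> / A powr (3/2)) * exp (- (K^2) / (2 * A)) * \<bar>e\<bar>"
    by (simp add: abs_mult)
  also have "\<dots> \<le> 1 / pi * (sqrt 2 * (sqrt 2 * a2 * S^2) * \<bar>K\<bar> / (a1 powr (3/2) * S powr (3/2))) * (2 * a2 * S / (2 * a2 * S + K^2)) * 2"
  proof -
    have h1: "sqrt 2 * \<bar>B\<bar> * \<bar>K\<bar> / A powr (3/2) \<le> sqrt 2 * (sqrt 2 * a2 * S^2) * \<bar>K\<bar> / (a1 powr (3/2) * S powr (3/2))"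
      using Bb Ap a1p by (intro frac_le mult_right_mono mult_left_mono) auto
    have h2: "exp (- (K^2) / (2 * A)) \<le> 2 * a2 * S / (2 * a2 * S + K^2)" using ex1 ex2 by linarith
    have n1: "0 \<le> sqrt 2 * (sqrt 2 * a2 * S^2) * \<bar>K\<bar> / (a1 powr (3/2) * S powr (3/2))"
      using a1p a2 S by simp
    have n3: "0 \<le> 2 * a2 * S / (2 * a2 * S + K^2)" using a2 S by simp
    note i1 = mult_mono[OF h1 h2 n1 exp_ge_zero]
    have hx: "(sqrt 2 * \<bar>B\<bar> * \<bar>K\<bar> / A powr (3/2)) * exp (- (K^2) / (2 * A)) * \<bar>e\<bar>
       \<le> (sqrt 2 * (sqrt 2 * a2 * S^2) * \<bar>K\<bar> / (a1 powr (3/2) * S powr (3/2))) * (2 * a2 * S / (2 * a2 * S + K^2)) * 2"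
      by (rule mult_mono[OF i1 e mult_nonneg_nonneg[OF n1 n3] abs_ge_zero])
    show ?thesis using mult_left_mono[OF hx, of "1/pi"] by (simp only: mult.assoc) simp
  qed
  also have "\<dots> = (8 * a2^2 / (pi * a1 powr (3/2))) * (\<bar>K\<bar> * (S * sqrt S) / (2 * a2 * S + K^2))"
  proof -
    have gen: "1 / pi * (sqrt 2 * (sqrt 2 * a2 * (q*q)^2) * \<bar>K\<bar> / (a1 powr (3/2) * ((q*q) * q))) * (2 * a2 * (q*q) / (2 * a2 * (q*q) + K^2)) * 2
        = (8 * a2^2 / (pi * a1 powr (3/2))) * (\<bar>K\<bar> * ((q*q) * q) / (2 * a2 * (q*q) + K^2))" if q: "q > 0" for q
    proof -
      have d: "2 * a2 * (q*q) + K^2 > 0" using a2 q by (simp add: add_pos_nonneg)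
      show ?thesis using a1p(1) q d by (simp add: field_simps power2_eq_square)
    qed
    have "sqrt S * sqrt S = S" using S by simp
    then show ?thesis unfolding Sp using gen[of "sqrt S"] S by simp
  qed
  also have "\<dots> \<le> (8 * a2^2 / (pi * a1 powr (3/2))) * (2 * sqrt 2 * (\<bar>K\<bar> / (sqrt w * (4 * a2 + K^2 * w))))"
  proof (intro mult_left_mono)
    show "0 \<le> 8 * a2^2 / (pi * a1 powr (3/2))" using a1p by simp
    define r where "r = sqrt (S * w)"
    have r: "r \<le> sqrt 2" "r \<ge> 0" "r^2 = S * w" "sqrt S * sqrt w = r"
    proof -
      show "r \<le> sqrt 2" unfolding r_def using Sw by simp
      show "r \<ge> 0" unfolding r_def using S w by simp
      show "r^2 = S * w" unfolding r_def using S w by simp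
      show "sqrt S * sqrt w = r" unfolding r_def by (simp add: real_sqrt_mult)
    qed
    have r2: "r * r^2 \<le> sqrt 2 * 2" using r Sw S w by (intro mult_mono) auto
    have key: "\<bar>K\<bar> * (S * sqrt S) * (sqrt w * (4 * a2 + K^2 * w)) \<le> 2 * sqrt 2 * \<bar>K\<bar> * (2 * a2 * S + K^2)"
    proof -
      have "\<bar>K\<bar> * (S * sqrt S) * (sqrt w * (4 * a2 + K^2 * w)) = \<bar>K\<bar> * (4 * a2 * S * r + K^2 * (r * r^2))"
        using r by (simp add: algebra_simps power2_eq_square)
      also have "\<dots> \<le> \<bar>K\<bar> * (4 * a2 * S * sqrt 2 + K^2 * (sqrt 2 * 2))"
        using r r2 a2 S by (intro mult_left_mono add_mono) auto
      also have "\<dots> = 2 * sqrt 2 * \<bar>K\<bar> * (2 * a2 * S + K^2)" by (simp add: algebra_simps)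
      finally show ?thesis .
    qed
    have d1: "2 * a2 * S + K^2 > 0" using a2 S by (simp add: add_pos_nonneg)
    have d2: "sqrt w * (4 * a2 + K^2 * w) > 0" using a2 w by (simp add: add_pos_nonneg)
    show "\<bar>K\<bar> * (S * sqrt S) / (2 * a2 * S + K^2) \<le> 2 * sqrt 2 * (\<bar>K\<bar> / (sqrt w * (4 * a2 + K^2 * w)))"
      using key d1 d2 by (simp add: field_simps)
  qed
  finally show ?thesis by (simp add: algebra_simps)
qed



lemma H_deriv:
  fixes c K w :: real assumes c: "c > 0" and w: "w > 0"
  shows "((\<lambda>w. 2 / sqrt c * arctan (\<bar>K\<bar> * sqrt w / sqrt c)) has_real_derivative
          \<bar>K\<bar> / (sqrt w * (c + K^2 * w))) (at w)"
proof -
  have "((\<lambda>w. 2 / sqrt c * arctan (\<bar>K\<bar> * sqrt w / sqrt c)) has_real_derivative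
          2 / sqrt c * (inverse (1 + (\<bar>K\<bar> * sqrt w / sqrt c)^2) * (\<bar>K\<bar> * (inverse (sqrt w) / 2) / sqrt c))) (at w)"
    apply (rule DERIV_cmult)
    apply (rule DERIV_chain2[OF DERIV_arctan])
    apply (rule DERIV_cdivide)
    apply (rule DERIV_cmult)
    apply (rule DERIV_real_sqrt[OF w])
    done
  moreover have "2 / sqrt c * (inverse (1 + (\<bar>K\<bar> * sqrt w / sqrt c)^2) * (\<bar>K\<bar> * (inverse (sqrt w) / 2) / sqrt c))
      = \<bar>K\<bar> / (sqrt w * (c + K^2 * w))"
  proof -
    have gen: "2 / r * (inverse (1 + (\<bar>K\<bar> * q / r)^2) * (\<bar>K\<bar> * (inverse q / 2) / r))
        = \<bar>K\<bar> / (q * (r * r + K^2 * (q * q)))" if rq: "r > 0" "q > 0" for r q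
    proof -
      have "r * r + K^2 * (q * q) > 0" using rq by (simp add: add_pos_nonneg)
      moreover have "r^2 + K^2 * q^2 > 0" using rq by (simp add: add_pos_nonneg)
      moreover have "q * (r * r) + K * (K * (q * (q * q))) > 0" using rq
      proof -
        have "q * (r * r) > 0" using rq by simp
        moreover have "K * (K * (q * (q * q))) \<ge> 0"
          using rq by (metis mult.assoc mult_nonneg_nonneg zero_le_square less_imp_le)
        ultimately show ?thesis by linarith
      qed
      ultimately show ?thesis using rq by (simp add: field_simps power2_eq_square)
    qed
    show ?thesis using gen[of "sqrt c" "sqrt w"] c w by simp
  qed
  ultimately show ?thesis by simp
qed

lemma g_integral:
  fixes c K \<epsilon> :: real assumes c: "c > 0" and e: "\<epsilon> > 0"
  shows "((\<lambda>x. \<bar>K\<bar> / (sqrt (\<epsilon> + 1 - x) * (c + K^2 * (\<epsilon> + 1 - x))) + \<bar>K\<bar> / (sqrt (\<epsilon> + 1 + x) * (c + K^2 * (\<epsilon> + 1 + x))))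
          has_integral
         (2 * (2 / sqrt c * arctan (\<bar>K\<bar> * sqrt (\<epsilon> + 2) / sqrt c) - 2 / sqrt c * arctan (\<bar>K\<bar> * sqrt \<epsilon> / sqrt c)))) {-1..1}"
proof -
  define H where "H w = 2 / sqrt c * arctan (\<bar>K\<bar> * sqrt w / sqrt c)" for w
  define h where "h w = \<bar>K\<bar> / (sqrt w * (c + K^2 * w))" for w
  have Hd: "w > 0 \<Longrightarrow> (H has_real_derivative h w) (at w)" for w
    unfolding H_def h_def using H_deriv[OF c] by blast
  have "((\<lambda>x. h (\<epsilon> + 1 - x) + h (\<epsilon> + 1 + x)) has_integral
        ((- H (\<epsilon> + 1 - 1) + H (\<epsilon> + 1 + 1)) - (- H (\<epsilon> + 1 - (-1)) + H (\<epsilon> + 1 + (-1))))) {-1..1}"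
  proof (rule fundamental_theorem_of_calculus)
    show "-1 \<le> (1::real)" by simp
    fix x :: real assume x: "x \<in> {-1..1}"
    have p1: "\<epsilon> + 1 - x > 0" "\<epsilon> + 1 + x > 0" using x e by auto
    have d1: "((\<lambda>x. H (\<epsilon> + 1 - x)) has_real_derivative h (\<epsilon> + 1 - x) * (- 1)) (at x)"
      by (rule DERIV_chain2[of H "h (\<epsilon> + 1 - x)" "\<lambda>x. \<epsilon> + 1 - x" x, OF Hd[OF p1(1)]]) (auto intro!: derivative_eq_intros)
    have d2: "((\<lambda>x. H (\<epsilon> + 1 + x)) has_real_derivative h (\<epsilon> + 1 + x) * 1) (at x)"
      by (rule DERIV_chain2[of H "h (\<epsilon> + 1 + x)" "\<lambda>x. \<epsilon> + 1 + x" x, OF Hd[OF p1(2)]]) (auto intro!: derivative_eq_intros)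
    have "((\<lambda>x. - H (\<epsilon> + 1 - x) + H (\<epsilon> + 1 + x)) has_real_derivative (h (\<epsilon> + 1 - x) + h (\<epsilon> + 1 + x))) (at x)"
      using DERIV_add[OF DERIV_minus[OF d1] d2] by simp
    then show "((\<lambda>x. - H (\<epsilon> + 1 - x) + H (\<epsilon> + 1 + x)) has_vector_derivative (h (\<epsilon> + 1 - x) + h (\<epsilon> + 1 + x))) (at x within {-1..1})"
      by (simp add: has_real_derivative_iff_has_vector_derivative[symmetric] has_field_derivative_at_within)
  qed
  then show ?thesis unfolding h_def H_def by (simp add: algebra_simps)
qed



lemma bil_sym:
  assumes Gs: "\<And>k. \<Gamma> (- k) = \<Gamma> k"
  shows "bil \<Gamma> n a b = bil \<Gamma> n b a"
proof -
  have "bil \<Gamma> n a b = (\<Sum>j\<le>n. \<Sum>k\<le>n. \<Gamma> (int k - int j) * a k * b j)"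
    unfolding bil_def by (rule sum.swap)
  also have "\<dots> = bil \<Gamma> n b a"
    unfolding bil_def
  proof (intro sum.cong refl)
    fix j k
    have "\<Gamma> (int k - int j) = \<Gamma> (int j - int k)" using Gs[of "int j - int k"] by simp
    then show "\<Gamma> (int k - int j) * a k * b j = \<Gamma> (int j - int k) * b j * a k" by simp
  qed
  finally show ?thesis .
qed

lemma bil_expand:
  "bil \<Gamma> n (\<lambda>k. \<alpha> * v k + \<beta> * u k) (\<lambda>k. \<alpha> * v k + \<beta> * u k) =
   \<alpha>^2 * bil \<Gamma> n v v + \<alpha> * \<beta> * bil \<Gamma> n v u + \<alpha> * \<beta> * bil \<Gamma> n u v + \<beta>^2 * bil \<Gamma> n u u"
proof -
  have "bil \<Gamma> n (\<lambda>k. \<alpha> * v k + \<beta> * u k) (\<lambda>k. \<alpha> * v k + \<beta> * u k) =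
    (\<Sum>k\<le>n. \<Sum>j\<le>n. \<alpha>^2 * (\<Gamma> (int k - int j) * v k * v j) + \<alpha> * \<beta> * (\<Gamma> (int k - int j) * v k * u j)
        + \<alpha> * \<beta> * (\<Gamma> (int k - int j) * u k * v j) + \<beta>^2 * (\<Gamma> (int k - int j) * u k * u j))"
    unfolding bil_def by (intro sum.cong refl) (simp add: algebra_simps power2_eq_square)
  also have "\<dots> = \<alpha>^2 * bil \<Gamma> n v v + \<alpha> * \<beta> * bil \<Gamma> n v u + \<alpha> * \<beta> * bil \<Gamma> n u v + \<beta>^2 * bil \<Gamma> n u u"
    unfolding bil_def by (simp add: sum.distrib sum_distrib_left)
  finally show ?thesis .
qed

lemma bil_CS:
  assumes Gs: "\<And>k. \<Gamma> (- k) = \<Gamma> k" and Qnn: "\<And>a. bil \<Gamma> n a a \<ge> 0" and Ap: "bil \<Gamma> n u u > 0"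
  shows "(bil \<Gamma> n v u)^2 \<le> bil \<Gamma> n u u * bil \<Gamma> n v v"
proof -
  define A where "A = bil \<Gamma> n u u"
  define B where "B = bil \<Gamma> n v u"
  define C where "C = bil \<Gamma> n v v"
  have s: "bil \<Gamma> n u v = B" unfolding B_def by (rule bil_sym[where \<Gamma>=\<Gamma>, OF Gs])
  have "0 \<le> bil \<Gamma> n (\<lambda>k. A * v k + (- B) * u k) (\<lambda>k. A * v k + (- B) * u k)" by (rule Qnn)
  also have "\<dots> = A * (A * C - B^2)"
    unfolding bil_expand s by (simp add: A_def[symmetric] B_def[symmetric] C_def[symmetric] algebra_simps power2_eq_square)
  finally have "0 \<le> A * (A * C - B^2)" .
  then have "0 \<le> A * C - B^2" using Ap A_def by (simp add: zero_le_mult_iff)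
  then show ?thesis unfolding A_def B_def C_def by simp
qed

lemma covA_bil: "covA \<Gamma> n x = bil \<Gamma> n (\<lambda>k. x^k) (\<lambda>k. x^k)"
  unfolding covA_def bil_def by (intro sum.cong refl) (simp add: power_add mult.assoc)

lemma covB_bil: "covB \<Gamma> n x = bil \<Gamma> n (\<lambda>k. real k * x^(k-1)) (\<lambda>k. x^k)"
  unfolding covB_def bil_def
proof (intro sum.cong refl)
  fix k j
  show "\<Gamma> (int k - int j) * real k * x ^ (k + j - 1) = \<Gamma> (int k - int j) * (real k * x ^ (k - 1)) * x ^ j"
  proof (cases k)
    case 0 then show ?thesis by simp
  next
    case (Suc k') then show ?thesis by (simp add: power_add)
  qed
qed

lemma covC_bil: "covC \<Gamma> n x = bil \<Gamma> n (\<lambda>k. real k * x^(k-1)) (\<lambda>k. real k * x^(k-1))"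
  unfolding covC_def bil_def
proof (intro sum.cong refl)
  fix k j
  show "\<Gamma> (int k - int j) * real k * real j * x ^ (k + j - 2) = \<Gamma> (int k - int j) * (real k * x ^ (k - 1)) * (real j * x ^ (j - 1))"
  proof (cases k)
    case 0 then show ?thesis by simp
  next
    case (Suc k') then show ?thesis
    proof (cases j)
      case 0 then show ?thesis by simp
    next
      case (Suc j')
      have "k + j - 2 = k' + j'" using \<open>k = Suc k'\<close> Suc by simp
      then show ?thesis using \<open>k = Suc k'\<close> Suc by (simp add: power_add)
    qed
  qed
qed

lemma phi_anti:
  fixes c K w w0 :: real assumes c: "c > 0" and w0: "0 < w0" "w0 \<le> w"
  shows "\<bar>K\<bar> / (sqrt w * (c + K^2 * w)) \<le> \<bar>K\<bar> / (sqrt w0 * (c + K^2 * w0))"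
proof (rule divide_left_mono)
  show "sqrt w0 * (c + K^2 * w0) \<le> sqrt w * (c + K^2 * w)"
    using w0 c by (intro mult_mono add_left_mono mult_left_mono) (auto simp: add_pos_nonneg)
  show "0 < sqrt w * (c + K^2 * w) * (sqrt w0 * (c + K^2 * w0))"
    using w0 c by (intro mult_pos_pos) (auto simp: add_pos_nonneg)
qed simp



lemma pointwise:
  fixes \<Gamma> :: "int \<Rightarrow> real" and K x a1 a2 :: real and n :: nat
  assumes a1: "a1 > 0" and a2: "a2 > 0"
    and Gs: "\<And>k. \<Gamma> (- k) = \<Gamma> k"
    and Qb: "\<And>a. a1 * (\<Sum>k\<le>n. (a k)^2) \<le> bil \<Gamma> n a a \<and> bil \<Gamma> n a a \<le> a2 * (\<Sum>k\<le>n. (a k)^2)"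
    and x: "x \<in> {-1..1}"
  shows "\<bar>F2 \<Gamma> n K x\<bar> \<le> (8 * a2^2 / (pi * a1 powr (3/2))) * (2 * sqrt 2) *
     (\<bar>K\<bar> / (sqrt (1 / (real n + 1) + 1 - x) * (4 * a2 + K^2 * (1 / (real n + 1) + 1 - x))) +
      \<bar>K\<bar> / (sqrt (1 / (real n + 1) + 1 + x) * (4 * a2 + K^2 * (1 / (real n + 1) + 1 + x))))"
proof -
  have pw: "(z^m)^2 = (z^2)^m" for z :: real and m :: nat by (metis power_mult mult.commute)
  define y where "y = x^2"
  have y: "0 \<le> y" "y \<le> 1" unfolding y_def using x by (auto simp: abs_square_le_1)
  define S where "S = (\<Sum>k\<le>n. y^k)"
  have S1: "S \<ge> 1"
  proof -
    have "y^0 \<le> S" unfolding S_def by (rule member_le_sum) (use y in auto)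
    then show ?thesis by simp
  qed
  define u where "u = (\<lambda>k. x^k)"
  define v where "v = (\<lambda>k::nat. real k * x^(k-1))"
  have su: "(\<Sum>k\<le>n. (u k)^2) = S" unfolding S_def u_def y_def
    by (intro sum.cong refl) (rule pw)
  have sv: "(\<Sum>k\<le>n. (v k)^2) = (\<Sum>k\<le>n. (real k)^2 * y^(k-1))" unfolding v_def y_def
    by (intro sum.cong refl) (simp only: power_mult_distrib pw)
  define A where "A = covA \<Gamma> n x"
  define B where "B = covB \<Gamma> n x"
  define C where "C = covC \<Gamma> n x"
  have A_eq: "A = bil \<Gamma> n u u" unfolding A_def u_def by (rule covA_bil)
  have B_eq: "B = bil \<Gamma> n v u" unfolding B_def u_def v_def by (rule covB_bil)
  have C_eq: "C = bil \<Gamma> n v v" unfolding C_def v_def by (rule covC_bil)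
  have AS1: "a1 * S \<le> A" and AS2: "A \<le> a2 * S" using Qb[of u] su A_eq by auto
  have Ap: "A > 0"
  proof -
    have "a1 * S > 0" using a1 S1 by simp
    then show ?thesis using AS1 by linarith
  qed
  have C1: "C \<le> a2 * (2 * S^3)"
  proof -
    have "C \<le> a2 * (\<Sum>k\<le>n. (real k)^2 * y^(k-1))" using Qb[of v] sv C_eq by auto
    also have "\<dots> \<le> a2 * (2 * S^3)" using S2_bound[OF y(1), of n] a2 unfolding S_def by simp
    finally show ?thesis .
  qed
  have Qnn: "bil \<Gamma> n a a \<ge> 0" for a
  proof -
    have "0 \<le> a1 * (\<Sum>k\<le>n. (a k)^2)" using a1 by (intro mult_nonneg_nonneg sum_nonneg) auto
    then show ?thesis using Qb[of a] by linarith
  qed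
  have C0: "C \<ge> 0" using Qnn[of v] C_eq by simp
  have CS: "B^2 \<le> A * C" unfolding A_eq B_eq C_eq
    by (rule bil_CS[where \<Gamma>=\<Gamma>, OF Gs Qnn]) (use Ap A_eq in simp)
  have B2: "B^2 \<le> 2 * a2^2 * S^4"
  proof -
    have "A * C \<le> (a2 * S) * (a2 * (2 * S^3))" using AS2 C1 Ap C0 a2 S1 by (intro mult_mono) auto
    also have "\<dots> = 2 * a2^2 * S^4" by (simp add: power2_eq_square power3_eq_cube power4_eq_xxxx)
    finally show ?thesis using CS by linarith
  qed
  define e where "e = erf (\<bar>B * K\<bar> / sqrt (2 * A * (A * C - B^2)))"
  have e: "\<bar>e\<bar> \<le> 2" unfolding e_def
    by (rule erf_bound) (use Ap CS in \<open>simp\<close>)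
  define \<epsilon> where "\<epsilon> = 1 / (real n + 1)"
  define w where "w = \<epsilon> + 1 - y"
  have w: "w > 0"
  proof -
    have "1 / (real n + 1) > 0" by simp
    then show ?thesis unfolding w_def \<epsilon>_def using y by linarith
  qed
  have Sw: "S * w \<le> 2" unfolding S_def w_def \<epsilon>_def using S_bound[OF y, of n] by (simp add: algebra_simps)
  note FB = F_bound[OF a1 a2 _ AS1 AS2 B2 e w Sw, of K]
  have F2eq: "F2 \<Gamma> n K x = 1 / pi * (sqrt 2 * \<bar>B * K\<bar> / A powr (3/2)) * exp (- (K^2) / (2 * A)) * e"
    unfolding F2_def Let_def A_def B_def C_def e_def ..
  have main: "\<bar>F2 \<Gamma> n K x\<bar> \<le> (8 * a2^2 / (pi * a1 powr (3/2))) * (2 * sqrt 2) * (\<bar>K\<bar> / (sqrt w * (4 * a2 + K^2 * w)))"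
  proof -
    have "S > 0" using S1 by simp
    then show ?thesis unfolding F2eq by (rule FB)
  qed
  have c4: "4 * a2 > 0" using a2 by simp
  have phi: "\<bar>K\<bar> / (sqrt w * (4 * a2 + K^2 * w)) \<le>
     \<bar>K\<bar> / (sqrt (\<epsilon> + 1 - x) * (4 * a2 + K^2 * (\<epsilon> + 1 - x))) +
     \<bar>K\<bar> / (sqrt (\<epsilon> + 1 + x) * (4 * a2 + K^2 * (\<epsilon> + 1 + x)))"
  proof (cases "x \<ge> 0")
    case True
    have "\<epsilon> > 0" unfolding \<epsilon>_def by simp
    have le: "\<epsilon> + 1 - x \<le> w"
    proof -
      have "x * x \<le> 1 * x" using True x by (intro mult_right_mono) auto
      then show ?thesis unfolding w_def y_def by (simp add: power2_eq_square)
    qed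
    have "\<bar>K\<bar> / (sqrt w * (4 * a2 + K^2 * w)) \<le> \<bar>K\<bar> / (sqrt (\<epsilon> + 1 - x) * (4 * a2 + K^2 * (\<epsilon> + 1 - x)))"
      by (rule phi_anti[OF c4 _ le]) (use x \<open>\<epsilon> > 0\<close> in auto)
    moreover have "0 \<le> \<bar>K\<bar> / (sqrt (\<epsilon> + 1 + x) * (4 * a2 + K^2 * (\<epsilon> + 1 + x)))"
      using True \<open>\<epsilon> > 0\<close> a2 by (simp add: add_pos_nonneg)
    ultimately show ?thesis by linarith
  next
    case False
    have "\<epsilon> > 0" unfolding \<epsilon>_def by simp
    have le: "\<epsilon> + 1 + x \<le> w"
    proof -
      have "(-x) * (-x) \<le> 1 * (-x)" using False x by (intro mult_right_mono) auto
      then show ?thesis unfolding w_def y_def by (simp add: power2_eq_square)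
    qed
    have "\<bar>K\<bar> / (sqrt w * (4 * a2 + K^2 * w)) \<le> \<bar>K\<bar> / (sqrt (\<epsilon> + 1 + x) * (4 * a2 + K^2 * (\<epsilon> + 1 + x)))"
      by (rule phi_anti[OF c4 _ le]) (use x \<open>\<epsilon> > 0\<close> in auto)
    moreover have "0 \<le> \<bar>K\<bar> / (sqrt (\<epsilon> + 1 - x) * (4 * a2 + K^2 * (\<epsilon> + 1 - x)))"
      using False \<open>\<epsilon> > 0\<close> a2 x by (simp add: add_pos_nonneg)
    ultimately show ?thesis by linarith
  qed
  have D0: "0 \<le> (8 * a2^2 / (pi * a1 powr (3/2))) * (2 * sqrt 2)" using a1 by simp
  show ?thesis using order_trans[OF main mult_left_mono[OF phi D0]] unfolding \<epsilon>_def .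
qed


theorem lemma2p1:
  fixes \<Gamma> :: "int \<Rightarrow> real" and f :: "real \<Rightarrow> real" and K :: "nat \<Rightarrow> real"
  assumes f_cont: "continuous_on {-pi..pi} f"
    and f_pos: "\<forall>\<phi>\<in>{-pi..pi}. f \<phi> > 0"
    and spectral: "\<forall>k. complex_of_real (\<Gamma> k) =
        integral {-pi..pi} (\<lambda>\<phi>. exp (- \<i> * of_int k * of_real \<phi>) * of_real (f \<phi>))"
    and \<Gamma>0: "\<Gamma> 0 = 1"
    and K_small: "K \<in> o(\<lambda>n. sqrt (real n / ln (ln (real n))))"
  shows "(\<lambda>n. integral {-1..1} (F2 \<Gamma> n (K n))) \<in> o(\<lambda>n. ln (ln (real n)))"
proof -
  have ne: "{-pi..pi} \<noteq> {}" by simp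
  obtain p0 where p0: "p0 \<in> {-pi..pi}" "\<forall>y\<in>{-pi..pi}. f p0 \<le> f y"
    using continuous_attains_inf[OF compact_Icc ne f_cont] by blast
  obtain p1 where p1: "p1 \<in> {-pi..pi}" "\<forall>y\<in>{-pi..pi}. f y \<le> f p1"
    using continuous_attains_sup[OF compact_Icc ne f_cont] by blast
  define m where "m = f p0"
  define M where "M = f p1"
  have m: "m > 0" unfolding m_def using f_pos p0 by blast
  have mM: "\<And>\<phi>. \<phi> \<in> {-pi..pi} \<Longrightarrow> m \<le> f \<phi> \<and> f \<phi> \<le> M"
    unfolding m_def M_def using p0 p1 by blast
  have M: "M > 0" using mM[OF p0(1)] m by linarith
  have Gc: "\<And>k. \<Gamma> k = integral {-pi..pi} (\<lambda>\<phi>. cos (real_of_int k * \<phi>) * f \<phi>)"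
    using Gamma_cos[OF f_cont spectral] by blast
  have Gs: "\<Gamma> (- k) = \<Gamma> k" for k
  proof -
    have "(\<lambda>\<phi>. cos (real_of_int (- k) * \<phi>) * f \<phi>) = (\<lambda>\<phi>. cos (real_of_int k * \<phi>) * f \<phi>)"
      by (rule ext) simp
    then show ?thesis using Gc[of "-k"] Gc[of k] by simp
  qed
  define a1 where "a1 = 2 * pi * m"
  define a2 where "a2 = 2 * pi * M"
  have a1: "a1 > 0" and a2: "a2 > 0" unfolding a1_def a2_def using m M by auto
  have Qb: "a1 * (\<Sum>k\<le>n. (a k)^2) \<le> bil \<Gamma> n a a \<and> bil \<Gamma> n a a \<le> a2 * (\<Sum>k\<le>n. (a k)^2)" for n a
    using Q_bounds[OF f_cont Gc mM, where n=n and a=a] unfolding a1_def a2_def by blast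
  define D where "D = (8 * a2^2 / (pi * a1 powr (3/2))) * (2 * sqrt 2)"
  have D0: "D \<ge> 0" unfolding D_def using a1 by simp
  define c where "c = 4 * a2"
  have c: "c > 0" unfolding c_def using a2 by simp
  define Bd where "Bd = D * (2 * (2 / sqrt c * (pi / 2)))"
  have bound: "\<bar>integral {-1..1} (F2 \<Gamma> n (K n))\<bar> \<le> Bd" for n
  proof -
    define \<epsilon> where "\<epsilon> = 1 / (real n + 1)"
    have e: "\<epsilon> > 0" unfolding \<epsilon>_def by simp
    define g where "g x = D * (\<bar>K n\<bar> / (sqrt (\<epsilon> + 1 - x) * (c + (K n)^2 * (\<epsilon> + 1 - x))) +
        \<bar>K n\<bar> / (sqrt (\<epsilon> + 1 + x) * (c + (K n)^2 * (\<epsilon> + 1 + x))))" for x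
    define Iv where "Iv = 2 * (2 / sqrt c * arctan (\<bar>K n\<bar> * sqrt (\<epsilon> + 2) / sqrt c) - 2 / sqrt c * arctan (\<bar>K n\<bar> * sqrt \<epsilon> / sqrt c))"
    have gI: "(g has_integral (D * Iv)) {-1..1}"
      unfolding g_def Iv_def by (rule has_integral_mult_right[OF g_integral[OF c e]])
    have Iv: "D * Iv \<le> Bd"
    proof -
      have "arctan (\<bar>K n\<bar> * sqrt (\<epsilon> + 2) / sqrt c) < pi / 2" by (rule arctan_ubound)
      moreover have "0 \<le> arctan (\<bar>K n\<bar> * sqrt \<epsilon> / sqrt c)" using e c by simp
      ultimately have "arctan (\<bar>K n\<bar> * sqrt (\<epsilon> + 2) / sqrt c) - arctan (\<bar>K n\<bar> * sqrt \<epsilon> / sqrt c) \<le> pi / 2"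
        by linarith
      then have "2 / sqrt c * (arctan (\<bar>K n\<bar> * sqrt (\<epsilon> + 2) / sqrt c) - arctan (\<bar>K n\<bar> * sqrt \<epsilon> / sqrt c)) \<le> 2 / sqrt c * (pi / 2)"
        using c by (intro mult_left_mono) auto
      then have "Iv \<le> 2 * (2 / sqrt c * (pi / 2))" unfolding Iv_def
        by (simp only: right_diff_distrib)
      then show ?thesis unfolding Bd_def using D0 by (rule mult_left_mono)
    qed
    have pw: "\<bar>F2 \<Gamma> n (K n) x\<bar> \<le> g x" if x: "x \<in> {-1..1}" for x
      using pointwise[OF a1 a2 Gs Qb x, where K="K n"] unfolding g_def \<epsilon>_def c_def D_def by simp
    show ?thesis
    proof (cases "F2 \<Gamma> n (K n) integrable_on {-1..1}")
      case True
      have "norm (integral {-1..1} (F2 \<Gamma> n (K n))) \<le> integral {-1..1} g"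
        by (rule integral_norm_bound_integral[OF True]) (use gI pw in auto)
      then show ?thesis using integral_unique[OF gI] Iv by simp
    next
      case False
      then have "integral {-1..1} (F2 \<Gamma> n (K n)) = 0" by (rule not_integrable_integral)
      moreover have "Bd \<ge> 0" unfolding Bd_def using D0 c by simp
      ultimately show ?thesis by simp
    qed
  qed
  have O1: "(\<lambda>n. integral {-1..1} (F2 \<Gamma> n (K n))) \<in> O(\<lambda>_. 1)"
    by (rule bigoI[where c = Bd]) (use bound in simp)
  have o1: "(\<lambda>_. 1) \<in> o(\<lambda>n. ln (ln (real n)))" by real_asymp
  show ?thesis by (rule landau_o.big_small_trans[OF O1 o1])
qed


end
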